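(* Let $(\Omega,+)$ be a group and $a,b$ subgroups with $a\top b$. Then $a^\top\cap{}^\top b=\{x\subseteq\Omega: a\top x,\ x\top b\}$ is stable under the ternary law $(x,y,z)\mapsto\Gamma(x,a,y,b,z)$ on the power set of $\Omega$, and with the induced law it is a torsor, denoted $U_{ab}$, which is naturally isomorphic (via left graphs $F\mapsto\{\alpha+F(\alpha):\alpha\in a\}$) to the torsor of all bijections $F:a\to b$ with torsor law $(XYZ)=Z\circ Y^{-1}\circ X$.
   Context: $(\Omega,+)$ is a group written additively but not necessarily abelian. For subsets $x,y$, $x\top y$ means every $\omega\in\Omega$ has a unique decomposition $\omega=\xi+\eta$ with $\xi\in x,\eta\in y$. $\Gamma(x,a,y,b,z)=\{\omega:\exists\alpha\in a,\beta\in b:\ \alpha+\omega+\beta\in y,\ \alpha+\omega\in z,\ \omega+\beta\in x\}$. A torsor is a set $G$ with a map $(x,y,z)\mapsto(xyz)$ such that $(xy(zuv))=(x(uzy)v)=((xyz)uv)$ and $(xxy)=y=(yxx)$ for all elements. *)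

theory Defs
  imports Main "HOL-Library.FuncSet"
begin

definition add_subgroup :: "'a::group_add set \<Rightarrow> bool" where
  "add_subgroup a \<longleftrightarrow> 0 \<in> a \<and> (\<forall>x\<in>a. \<forall>y\<in>a. x + y \<in> a) \<and> (\<forall>x\<in>a. - x \<in> a)"

definition transv :: "'a::group_add set \<Rightarrow> 'a set \<Rightarrow> bool" where
  "transv x y \<longleftrightarrow> (\<forall>\<omega>. \<exists>!p. fst p \<in> x \<and> snd p \<in> y \<and> \<omega> = fst p + snd p)"

definition Gamma :: "'a::group_add set \<Rightarrow> 'a set \<Rightarrow> 'a set \<Rightarrow> 'a set \<Rightarrow> 'a set \<Rightarrow> 'a set" where
  "Gamma x a y b z = {\<omega>. \<exists>\<alpha>\<in>a. \<exists>\<beta>\<in>b. \<alpha> + \<omega> + \<beta> \<in> y \<and> \<alpha> + \<omega> \<in> z \<and> \<omega> + \<beta> \<in> x}"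

definition torsor :: "'g set \<Rightarrow> ('g \<Rightarrow> 'g \<Rightarrow> 'g \<Rightarrow> 'g) \<Rightarrow> bool" where
  "torsor G m \<longleftrightarrow>
     (\<forall>x\<in>G. \<forall>y\<in>G. \<forall>z\<in>G. m x y z \<in> G) \<and>
     (\<forall>x\<in>G. \<forall>y\<in>G. \<forall>z\<in>G. \<forall>u\<in>G. \<forall>v\<in>G.
        m x y (m z u v) = m x (m u z y) v \<and> m x (m u z y) v = m (m x y z) u v) \<and>
     (\<forall>x\<in>G. \<forall>y\<in>G. m x x y = y \<and> m y x x = y)"

definition Uab :: "'a::group_add set \<Rightarrow> 'a set \<Rightarrow> 'a set set" where
  "Uab a b = {x. transv a x \<and> transv x b}"

definition bijs :: "'a set \<Rightarrow> 'a set \<Rightarrow> ('a \<Rightarrow> 'a) set" where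
  "bijs a b = {F. F \<in> a \<rightarrow>\<^sub>E b \<and> bij_betw F a b}"

definition bij_law :: "'a set \<Rightarrow> ('a \<Rightarrow> 'a) \<Rightarrow> ('a \<Rightarrow> 'a) \<Rightarrow> ('a \<Rightarrow> 'a) \<Rightarrow> ('a \<Rightarrow> 'a)" where
  "bij_law a X Y Z = (\<lambda>\<alpha>\<in>a. Z (inv_into a Y (X \<alpha>)))"

definition left_graph :: "'a::group_add set \<Rightarrow> ('a \<Rightarrow> 'a) \<Rightarrow> 'a set" where
  "left_graph a F = {\<alpha> + F \<alpha> | \<alpha>. \<alpha> \<in> a}"

end

theory Submission
  imports Defs
begin


lemma transv_ex:
  assumes "transv x y" obtains \<xi> \<eta> where "\<xi> \<in> x" "\<eta> \<in> y" "\<omega> = \<xi> + \<eta>"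
proof -
  from assms have "\<exists>p. fst p \<in> x \<and> snd p \<in> y \<and> \<omega> = fst p + snd p"
    unfolding transv_def by blast
  then show ?thesis using that by blast
qed

lemma transv_uniq:
  assumes "transv x y" "\<xi> \<in> x" "\<eta> \<in> y" "\<xi>' \<in> x" "\<eta>' \<in> y" "\<xi> + \<eta> = \<xi>' + \<eta>'"
  shows "\<xi> = \<xi>' \<and> \<eta> = \<eta>'"
proof -
  from assms(1) have "\<exists>!p. fst p \<in> x \<and> snd p \<in> y \<and> \<xi> + \<eta> = fst p + snd p"
    unfolding transv_def by blast
  then obtain p where "\<forall>q. fst q \<in> x \<and> snd q \<in> y \<and> \<xi> + \<eta> = fst q + snd q \<longrightarrow> q = p"
    by blast
  then have "(\<xi>,\<eta>) = p" "(\<xi>',\<eta>') = p" using assms(2-6) by auto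
  then have "(\<xi>,\<eta>) = (\<xi>',\<eta>')" by simp
  then show ?thesis by simp
qed

lemma transv_intro:
  assumes "\<And>\<omega>. \<exists>\<xi>\<in>x. \<exists>\<eta>\<in>y. \<omega> = \<xi> + \<eta>"
    "\<And>\<xi> \<eta> \<xi>' \<eta>'. \<xi> \<in> x \<Longrightarrow> \<eta> \<in> y \<Longrightarrow> \<xi>' \<in> x \<Longrightarrow> \<eta>' \<in> y \<Longrightarrow> \<xi> + \<eta> = \<xi>' + \<eta>' \<Longrightarrow> \<xi> = \<xi>' \<and> \<eta> = \<eta>'"
  shows "transv x y"
  unfolding transv_def
proof
  fix \<omega>
  obtain \<xi> \<eta> where h: "\<xi>\<in>x" "\<eta>\<in>y" "\<omega> = \<xi> + \<eta>" using assms(1)[of \<omega>] by blast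
  show "\<exists>!p. fst p \<in> x \<and> snd p \<in> y \<and> \<omega> = fst p + snd p"
  proof (rule ex1I[of _ "(\<xi>,\<eta>)"])
    show "fst (\<xi>, \<eta>) \<in> x \<and> snd (\<xi>, \<eta>) \<in> y \<and> \<omega> = fst (\<xi>, \<eta>) + snd (\<xi>, \<eta>)" using h by simp
    fix p assume "fst p \<in> x \<and> snd p \<in> y \<and> \<omega> = fst p + snd p"
    then have P: "fst p \<in> x" "snd p \<in> y" "fst p + snd p = \<xi> + \<eta>" using h by auto
    have "fst p = \<xi> \<and> snd p = \<eta>" by (rule assms(2)[OF P(1,2) h(1,2) P(3)])
    then show "p = (\<xi>,\<eta>)" by (simp add: prod_eq_iff)
  qed
qed



lemma sg: assumes "add_subgroup a"
  shows "0 \<in> a" "x \<in> a \<Longrightarrow> y \<in> a \<Longrightarrow> x + y \<in> a" "x \<in> a \<Longrightarrow> - x \<in> a"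
  using assms unfolding add_subgroup_def by auto

lemma bijsD: assumes "F \<in> bijs a b"
  shows "F \<in> a \<rightarrow>\<^sub>E b" "bij_betw F a b" "\<And>x. x \<in> a \<Longrightarrow> F x \<in> b" "inj_on F a" "F ` a = b"
  using assms unfolding bijs_def bij_betw_def by auto

lemma inv_in: assumes "F \<in> bijs a b" "\<beta> \<in> b"
  shows "inv_into a F \<beta> \<in> a" "F (inv_into a F \<beta>) = \<beta>"
  using bijsD[OF assms(1)] assms(2) by (auto intro: inv_into_into f_inv_into_f)

lemma inv_eq: assumes "F \<in> bijs a b" "\<gamma> \<in> a" "F \<gamma> = \<beta>"
  shows "inv_into a F \<beta> = \<gamma>"
proof -
  have "inv_into a F (F \<gamma>) = \<gamma>" by (rule inv_into_f_f[OF bijsD(4)[OF assms(1)] assms(2)])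
  then show ?thesis using assms(3) by simp
qed

lemma law_app: "\<alpha> \<in> a \<Longrightarrow> bij_law a X Y Z \<alpha> = Z (inv_into a Y (X \<alpha>))"
  unfolding bij_law_def by simp

lemma law_bij: assumes "X \<in> bijs a b" "Y \<in> bijs a b" "Z \<in> bijs a b"
  shows "bij_law a X Y Z \<in> bijs a b"
proof -
  have "bij_betw (inv_into a Y) b a" using bijsD(2)[OF assms(2)] by (rule bij_betw_inv_into)
  then have "bij_betw (Z \<circ> inv_into a Y \<circ> X) a b"
    by (rule bij_betw_trans[OF bijsD(2)[OF assms(1)] bij_betw_trans[OF _ bijsD(2)[OF assms(3)]]])
  moreover have "bij_betw (bij_law a X Y Z) a b = bij_betw (Z \<circ> inv_into a Y \<circ> X) a b"
    by (rule bij_betw_cong) (simp add: law_app)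
  ultimately have "bij_betw (bij_law a X Y Z) a b" by simp
  moreover have "bij_law a X Y Z \<in> a \<rightarrow>\<^sub>E b"
    unfolding bij_law_def restrict_PiE_iff
    using inv_in(1)[OF assms(2)] bijsD(3)[OF assms(1)] bijsD(3)[OF assms(3)] by blast
  ultimately show ?thesis unfolding bijs_def by blast
qed

lemma ext_eq: assumes "F \<in> bijs a b" "G \<in> bijs a b" "\<And>\<alpha>. \<alpha> \<in> a \<Longrightarrow> F \<alpha> = G \<alpha>"
  shows "F = G"
proof (rule extensionalityI[where A=a])
  show "F \<in> extensional a" "G \<in> extensional a" using bijsD(1)[OF assms(1)] bijsD(1)[OF assms(2)] by (auto simp: PiE_def)
qed (rule assms(3))


lemma torsor_bijs: "torsor (bijs a b) (bij_law a)"
  unfolding torsor_def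
proof (intro conjI ballI)
  fix x y z assume "x \<in> bijs a b" "y \<in> bijs a b" "z \<in> bijs a b"
  then show "bij_law a x y z \<in> bijs a b" by (rule law_bij)
next
  fix x y z u v assume A: "x \<in> bijs a b" "y \<in> bijs a b" "z \<in> bijs a b" "u \<in> bijs a b" "v \<in> bijs a b"
  have i1: "\<And>\<alpha>. \<alpha> \<in> a \<Longrightarrow> inv_into a y (x \<alpha>) \<in> a" using inv_in(1)[OF A(2) bijsD(3)[OF A(1)]] by blast
  have i2: "\<And>\<alpha>. \<alpha> \<in> a \<Longrightarrow> inv_into a (bij_law a u z y) (x \<alpha>) = inv_into a u (z (inv_into a y (x \<alpha>)))"
  proof -
    fix \<alpha> assume h: "\<alpha> \<in> a"
    have xa: "x \<alpha> \<in> b" by (rule bijsD(3)[OF A(1) h])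
    have za: "z (inv_into a y (x \<alpha>)) \<in> b" by (rule bijsD(3)[OF A(3) i1[OF h]])
    define w where "w = inv_into a y (x \<alpha>)"
    have wa: "w \<in> a" unfolding w_def by (rule i1[OF h])
    have yw: "y w = x \<alpha>" unfolding w_def by (rule inv_in(2)[OF A(2) xa])
    have za': "z w \<in> b" using za unfolding w_def .
    have t1: "inv_into a u (z w) \<in> a" by (rule inv_in(1)[OF A(4) za'])
    have t2: "u (inv_into a u (z w)) = z w" by (rule inv_in(2)[OF A(4) za'])
    have t3: "inv_into a z (z w) = w" by (rule inv_eq[OF A(3) wa refl])
    have "bij_law a u z y (inv_into a u (z w)) = x \<alpha>"
      using law_app[OF t1, of u z y] t2 t3 yw by simp
    then have "inv_into a (bij_law a u z y) (x \<alpha>) = inv_into a u (z w)"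
      by (rule inv_eq[OF law_bij[OF A(4,3,2)] t1])
    then show "inv_into a (bij_law a u z y) (x \<alpha>) = inv_into a u (z (inv_into a y (x \<alpha>)))"
      unfolding w_def .
  qed
  have L1: "bij_law a z u v \<in> bijs a b" "bij_law a u z y \<in> bijs a b" "bij_law a x y z \<in> bijs a b"
    using law_bij[OF A(3,4,5)] law_bij[OF A(4,3,2)] law_bij[OF A(1,2,3)] by auto
  show "bij_law a x y (bij_law a z u v) = bij_law a x (bij_law a u z y) v"
    by (rule ext_eq[OF law_bij[OF A(1,2) L1(1)] law_bij[OF A(1) L1(2) A(5)]])
      (simp add: law_app i1 i2)
  show "bij_law a x (bij_law a u z y) v = bij_law a (bij_law a x y z) u v"
    by (rule ext_eq[OF law_bij[OF A(1) L1(2) A(5)] law_bij[OF L1(3) A(4,5)]])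
      (simp add: law_app i1 i2)
next
  fix x y assume A: "x \<in> bijs a b" "y \<in> bijs a b"
  show "bij_law a x x y = y"
    by (rule ext_eq[OF law_bij[OF A(1,1,2)] A(2)]) (simp add: law_app bijsD(4)[OF A(1)] inv_into_f_f)
  show "bij_law a y x x = y"
    by (rule ext_eq[OF law_bij[OF A(2,1,1)] A(2)]) (simp add: law_app bijsD(3)[OF A(2)] inv_in[OF A(1)])
qed



lemma torsor_transport:
  assumes T: "torsor G m" and B: "bij_betw f G H"
    and hom: "\<And>x y z. x \<in> G \<Longrightarrow> y \<in> G \<Longrightarrow> z \<in> G \<Longrightarrow> f (m x y z) = m' (f x) (f y) (f z)"
  shows "torsor H m'"
proof -
  have im: "f ` G = H" using B by (simp add: bij_betw_def)
  have cl: "\<And>x y z. x \<in> G \<Longrightarrow> y \<in> G \<Longrightarrow> z \<in> G \<Longrightarrow> m x y z \<in> G" using T unfolding torsor_def by blast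
  have as1: "\<And>x y z u v. x \<in> G \<Longrightarrow> y \<in> G \<Longrightarrow> z \<in> G \<Longrightarrow> u \<in> G \<Longrightarrow> v \<in> G \<Longrightarrow>
     m x y (m z u v) = m x (m u z y) v" using T unfolding torsor_def by blast
  have as2: "\<And>x y z u v. x \<in> G \<Longrightarrow> y \<in> G \<Longrightarrow> z \<in> G \<Longrightarrow> u \<in> G \<Longrightarrow> v \<in> G \<Longrightarrow>
     m x (m u z y) v = m (m x y z) u v" using T unfolding torsor_def by blast
  have id1: "\<And>x y. x \<in> G \<Longrightarrow> y \<in> G \<Longrightarrow> m x x y = y" using T unfolding torsor_def by blast
  have id2: "\<And>x y. x \<in> G \<Longrightarrow> y \<in> G \<Longrightarrow> m y x x = y" using T unfolding torsor_def by blast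
  show ?thesis unfolding torsor_def
  proof (intro conjI ballI)
    fix x y z assume "x \<in> H" "y \<in> H" "z \<in> H"
    then obtain X Y Z where "X \<in> G" "Y \<in> G" "Z \<in> G" "x = f X" "y = f Y" "z = f Z" using im by blast
    then have "m' x y z = f (m X Y Z)" using hom[of X Y Z] by simp
    then show "m' x y z \<in> H" using cl[of X Y Z] im \<open>X \<in> G\<close> \<open>Y \<in> G\<close> \<open>Z \<in> G\<close> by blast
  next
    fix x y z u v assume H: "x \<in> H" "y \<in> H" "z \<in> H" "u \<in> H" "v \<in> H"
    obtain X where X: "X \<in> G" "x = f X" using H(1) im by blast
    obtain Y where Y: "Y \<in> G" "y = f Y" using H(2) im by blast
    obtain Z where Z: "Z \<in> G" "z = f Z" using H(3) im by blast
    obtain U where U: "U \<in> G" "u = f U" using H(4) im by blast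
    obtain V where V: "V \<in> G" "v = f V" using H(5) im by blast
    note G = X(1) Y(1) Z(1) U(1) V(1)
    note e = X(2) Y(2) Z(2) U(2) V(2)
    have h1: "m' x y (m' z u v) = f (m X Y (m Z U V))" using G e by (simp add: hom cl)
    have h2: "m' x (m' u z y) v = f (m X (m U Z Y) V)" using G e by (simp add: hom cl)
    have h3: "m' (m' x y z) u v = f (m (m X Y Z) U V)" using G e by (simp add: hom cl)
    show "m' x y (m' z u v) = m' x (m' u z y) v" using h1 h2 as1[OF G] by simp
    show "m' x (m' u z y) v = m' (m' x y z) u v" using h2 h3 as2[OF G] by simp
  next
    fix x y assume "x \<in> H" "y \<in> H"
    then obtain X Y where G: "X \<in> G" "Y \<in> G" and e: "x = f X" "y = f Y" using im by blast
    show "m' x x y = y" using G e hom[of X X Y] id1[OF G] by simp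
    show "m' y x x = y" using G e hom[of Y X X] id2[OF G] by simp
  qed
qed

lemma lg_mem: "\<xi> \<in> left_graph a F \<longleftrightarrow> (\<exists>\<alpha>\<in>a. \<xi> = \<alpha> + F \<alpha>)"
  by (auto simp: left_graph_def)

context
  fixes a b :: "'a::group_add set"
  assumes sa: "add_subgroup a" and sb: "add_subgroup b" and tab: "transv a b"
begin

lemma G1: assumes F: "F \<in> bijs a b" shows "left_graph a F \<in> Uab a b"
proof -
  have "transv a (left_graph a F)"
  proof (rule transv_intro)
    fix \<omega>
    obtain \<gamma> \<delta> where h: "\<gamma> \<in> a" "\<delta> \<in> b" "\<omega> = \<gamma> + \<delta>" using transv_ex[OF tab] by blast
    define \<alpha> where "\<alpha> = inv_into a F \<delta>"
    have al: "\<alpha> \<in> a" "F \<alpha> = \<delta>" unfolding \<alpha>_def using inv_in[OF F h(2)] by auto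
    have "\<gamma> + - \<alpha> \<in> a" using sg[OF sa] h(1) al(1) by blast
    moreover have "\<alpha> + F \<alpha> \<in> left_graph a F" using al(1) by (auto simp: lg_mem)
    moreover have "\<omega> = (\<gamma> + - \<alpha>) + (\<alpha> + F \<alpha>)" using h al by (simp add: add.assoc diff_conv_add_uminus del: add_uminus_conv_diff)
    ultimately show "\<exists>\<xi>\<in>a. \<exists>\<eta>\<in>left_graph a F. \<omega> = \<xi> + \<eta>" by blast
  next
    fix \<xi> \<eta> \<xi>' \<eta>'
    assume h: "\<xi> \<in> a" "\<eta> \<in> left_graph a F" "\<xi>' \<in> a" "\<eta>' \<in> left_graph a F" "\<xi> + \<eta> = \<xi>' + \<eta>'"
    obtain \<alpha>1 where a1: "\<alpha>1 \<in> a" "\<eta> = \<alpha>1 + F \<alpha>1" using h(2) by (auto simp: lg_mem)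
    obtain \<alpha>2 where a2: "\<alpha>2 \<in> a" "\<eta>' = \<alpha>2 + F \<alpha>2" using h(4) by (auto simp: lg_mem)
    have "(\<xi> + \<alpha>1) + F \<alpha>1 = (\<xi>' + \<alpha>2) + F \<alpha>2" using h(5) a1 a2 by (simp add: add.assoc diff_conv_add_uminus del: add_uminus_conv_diff)
    then have e: "\<xi> + \<alpha>1 = \<xi>' + \<alpha>2 \<and> F \<alpha>1 = F \<alpha>2"
      by (intro transv_uniq[OF tab]) (use sg[OF sa] h(1,3) a1(1) a2(1) bijsD(3)[OF F] in auto)
    then have "\<alpha>1 = \<alpha>2" using bijsD(4)[OF F] a1(1) a2(1) by (auto dest: inj_onD)
    then show "\<xi> = \<xi>' \<and> \<eta> = \<eta>'" using e a1 a2 by simp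
  qed
  moreover have "transv (left_graph a F) b"
  proof (rule transv_intro)
    fix \<omega>
    obtain \<gamma> \<delta> where h: "\<gamma> \<in> a" "\<delta> \<in> b" "\<omega> = \<gamma> + \<delta>" using transv_ex[OF tab] by blast
    have "- F \<gamma> + \<delta> \<in> b" using sg[OF sb] h(2) bijsD(3)[OF F h(1)] by blast
    moreover have "\<gamma> + F \<gamma> \<in> left_graph a F" using h(1) by (auto simp: lg_mem)
    moreover have "\<omega> = (\<gamma> + F \<gamma>) + (- F \<gamma> + \<delta>)" using h by (simp add: add.assoc diff_conv_add_uminus del: add_uminus_conv_diff)
    ultimately show "\<exists>\<xi>\<in>left_graph a F. \<exists>\<eta>\<in>b. \<omega> = \<xi> + \<eta>" by blast
  next
    fix \<xi> \<eta> \<xi>' \<eta>'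
    assume h: "\<xi> \<in> left_graph a F" "\<eta> \<in> b" "\<xi>' \<in> left_graph a F" "\<eta>' \<in> b" "\<xi> + \<eta> = \<xi>' + \<eta>'"
    obtain \<alpha>1 where a1: "\<alpha>1 \<in> a" "\<xi> = \<alpha>1 + F \<alpha>1" using h(1) by (auto simp: lg_mem)
    obtain \<alpha>2 where a2: "\<alpha>2 \<in> a" "\<xi>' = \<alpha>2 + F \<alpha>2" using h(3) by (auto simp: lg_mem)
    have "\<alpha>1 + (F \<alpha>1 + \<eta>) = \<alpha>2 + (F \<alpha>2 + \<eta>')" using h(5) a1 a2 by (simp add: add.assoc diff_conv_add_uminus del: add_uminus_conv_diff)
    then have e: "\<alpha>1 = \<alpha>2 \<and> F \<alpha>1 + \<eta> = F \<alpha>2 + \<eta>'"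
      by (intro transv_uniq[OF tab]) (use sg[OF sb] h(2,4) a1(1) a2(1) bijsD(3)[OF F] in auto)
    then show "\<xi> = \<xi>' \<and> \<eta> = \<eta>'" using a1 a2 by auto
  qed
  ultimately show ?thesis unfolding Uab_def by blast
qed


lemma G2: assumes x: "x \<in> Uab a b" shows "\<exists>F\<in>bijs a b. x = left_graph a F"
proof -
  have tax: "transv a x" and txb: "transv x b" using x unfolding Uab_def by auto
  have ex1: "\<exists>!\<beta>. \<beta> \<in> b \<and> \<alpha> + \<beta> \<in> x" if al: "\<alpha> \<in> a" for \<alpha>
  proof (rule ex_ex1I)
    obtain \<xi> \<beta>' where h: "\<xi> \<in> x" "\<beta>' \<in> b" "\<alpha> = \<xi> + \<beta>'" using transv_ex[OF txb] by blast
    have "\<alpha> + - \<beta>' = \<xi>" using h(3) by (simp add: add.assoc diff_conv_add_uminus del: add_uminus_conv_diff)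
    then have "- \<beta>' \<in> b \<and> \<alpha> + - \<beta>' \<in> x" using h sg[OF sb] by auto
    then show "\<exists>\<beta>. \<beta> \<in> b \<and> \<alpha> + \<beta> \<in> x" by blast
  next
    fix \<beta>1 \<beta>2 assume h1: "\<beta>1 \<in> b \<and> \<alpha> + \<beta>1 \<in> x" and h2: "\<beta>2 \<in> b \<and> \<alpha> + \<beta>2 \<in> x"
    have "(\<alpha> + \<beta>1) + (- \<beta>1 + \<beta>2) = (\<alpha> + \<beta>2) + 0" by (simp add: add.assoc)
    then have "\<alpha> + \<beta>1 = \<alpha> + \<beta>2 \<and> - \<beta>1 + \<beta>2 = 0"
      by (intro transv_uniq[OF txb]) (use h1 h2 sg[OF sb] in auto)
    then show "\<beta>1 = \<beta>2" by simp
  qed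
  define F where "F = restrict (\<lambda>\<alpha>. THE \<beta>. \<beta> \<in> b \<and> \<alpha> + \<beta> \<in> x) a"
  have Fp: "F \<alpha> \<in> b \<and> \<alpha> + F \<alpha> \<in> x" if "\<alpha> \<in> a" for \<alpha>
  proof -
    have "(THE \<beta>. \<beta> \<in> b \<and> \<alpha> + \<beta> \<in> x) \<in> b \<and> \<alpha> + (THE \<beta>. \<beta> \<in> b \<and> \<alpha> + \<beta> \<in> x) \<in> x"
      by (rule theI'[OF ex1[OF that]])
    then show ?thesis using that by (simp add: F_def)
  qed
  have Fu: "F \<alpha> = \<beta>" if "\<alpha> \<in> a" "\<beta> \<in> b" "\<alpha> + \<beta> \<in> x" for \<alpha> \<beta>
  proof -
    have "(THE \<beta>. \<beta> \<in> b \<and> \<alpha> + \<beta> \<in> x) = \<beta>"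
      by (rule the1_equality[OF ex1[OF that(1)]]) (use that in simp)
    then show ?thesis using that by (simp add: F_def)
  qed
  have xeq: "x = left_graph a F"
  proof
    show "x \<subseteq> left_graph a F"
    proof
      fix \<xi> assume xi: "\<xi> \<in> x"
      obtain \<alpha> \<beta> where h: "\<alpha> \<in> a" "\<beta> \<in> b" "\<xi> = \<alpha> + \<beta>" using transv_ex[OF tab] by blast
      have "F \<alpha> = \<beta>" by (rule Fu[OF h(1,2)]) (use xi h(3) in simp)
      then show "\<xi> \<in> left_graph a F" using h by (auto simp: lg_mem)
    qed
    show "left_graph a F \<subseteq> x" using Fp by (auto simp: lg_mem)
  qed
  have PiE: "F \<in> a \<rightarrow>\<^sub>E b" unfolding F_def restrict_PiE_iff using Fp unfolding F_def by simp
  have inj: "inj_on F a"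
  proof (rule inj_onI)
    fix \<alpha>1 \<alpha>2 assume h: "\<alpha>1 \<in> a" "\<alpha>2 \<in> a" "F \<alpha>1 = F \<alpha>2"
    have eq: "(\<alpha>2 + - \<alpha>1) + (\<alpha>1 + F \<alpha>1) = 0 + (\<alpha>2 + F \<alpha>2)"
      by (simp only: add.assoc minus_add_cancel add_0_left h(3))
    have m: "\<alpha>2 + - \<alpha>1 \<in> a" by (rule sg(2)[OF sa h(2) sg(3)[OF sa h(1)]])
    have p1: "\<alpha>1 + F \<alpha>1 \<in> x" "\<alpha>2 + F \<alpha>2 \<in> x" using Fp h(1,2) by auto
    have "\<alpha>2 + - \<alpha>1 = 0 \<and> \<alpha>1 + F \<alpha>1 = \<alpha>2 + F \<alpha>2"
      by (rule transv_uniq[OF tax m p1(1) sg(1)[OF sa] p1(2) eq])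
    then have "\<alpha>2 + - \<alpha>1 = 0" by (rule conjunct1)
    then show "\<alpha>1 = \<alpha>2" by (metis add_minus_cancel add_0_right)
  qed
  have surj: "F ` a = b"
  proof
    show "F ` a \<subseteq> b" using Fp by auto
    show "b \<subseteq> F ` a"
    proof
      fix \<beta> assume hb: "\<beta> \<in> b"
      obtain \<alpha>' \<xi> where h: "\<alpha>' \<in> a" "\<xi> \<in> x" "\<beta> = \<alpha>' + \<xi>" using transv_ex[OF tax] by blast
      obtain \<alpha> \<beta>0 where h2: "\<alpha> \<in> a" "\<beta>0 \<in> b" "\<xi> = \<alpha> + \<beta>0" using transv_ex[OF tab] by blast
      have f0: "F \<alpha> = \<beta>0" using Fu h2 h(2) by blast
      have "(\<alpha>' + \<alpha>) + \<beta>0 = 0 + \<beta>" using h h2 by (simp add: add.assoc)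
      then have "\<alpha>' + \<alpha> = 0 \<and> \<beta>0 = \<beta>"
        by (intro transv_uniq[OF tab]) (use h h2 hb sg[OF sa] in auto)
      then show "\<beta> \<in> F ` a" using f0 h2(1) by auto
    qed
  qed
  have "F \<in> bijs a b" unfolding bijs_def bij_betw_def using PiE inj surj by blast
  then show ?thesis using xeq by blast
qed

lemma G3: "inj_on (left_graph a) (bijs a b)"
proof (rule inj_onI)
  fix F G assume F: "F \<in> bijs a b" and G: "G \<in> bijs a b" and e: "left_graph a F = left_graph a G"
  show "F = G"
  proof (rule ext_eq[OF F G])
    fix \<alpha> assume h: "\<alpha> \<in> a"
    have "\<alpha> + F \<alpha> \<in> left_graph a F" using h by (auto simp: lg_mem)
    then have "\<alpha> + F \<alpha> \<in> left_graph a G" using e by simp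
    then obtain \<alpha>' where h': "\<alpha>' \<in> a" "\<alpha> + F \<alpha> = \<alpha>' + G \<alpha>'" by (auto simp: lg_mem)
    then have "\<alpha> = \<alpha>' \<and> F \<alpha> = G \<alpha>'"
      by (intro transv_uniq[OF tab]) (use h bijsD(3)[OF F h] bijsD(3)[OF G h'(1)] in auto)
    then show "F \<alpha> = G \<alpha>" by auto
  qed
qed

lemma G4: assumes X: "X \<in> bijs a b" and Y: "Y \<in> bijs a b" and Z: "Z \<in> bijs a b"
  shows "left_graph a (bij_law a X Y Z) = Gamma (left_graph a X) a (left_graph a Y) b (left_graph a Z)"
proof
  show "left_graph a (bij_law a X Y Z) \<subseteq> Gamma (left_graph a X) a (left_graph a Y) b (left_graph a Z)"
  proof
    fix \<omega> assume "\<omega> \<in> left_graph a (bij_law a X Y Z)"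
    then obtain \<alpha>1 where a1: "\<alpha>1 \<in> a" "\<omega> = \<alpha>1 + bij_law a X Y Z \<alpha>1" by (auto simp: lg_mem)
    have xa: "X \<alpha>1 \<in> b" by (rule bijsD(3)[OF X a1(1)])
    define w where "w = inv_into a Y (X \<alpha>1)"
    have wa: "w \<in> a" unfolding w_def by (rule inv_in(1)[OF Y xa])
    have yw: "Y w = X \<alpha>1" unfolding w_def by (rule inv_in(2)[OF Y xa])
    have zw: "Z w \<in> b" by (rule bijsD(3)[OF Z wa])
    have om: "\<omega> = \<alpha>1 + Z w" using a1 unfolding w_def by (simp add: law_app)
    have m1: "w + - \<alpha>1 \<in> a" using wa a1(1) sg[OF sa] by blast
    have m2: "- Z w + X \<alpha>1 \<in> b" using zw xa sg[OF sb] by blast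
    have "(w + - \<alpha>1) + \<omega> + (- Z w + X \<alpha>1) = w + Y w" using om yw
      by (simp add: add.assoc diff_conv_add_uminus del: add_uminus_conv_diff)
    then have c1: "(w + - \<alpha>1) + \<omega> + (- Z w + X \<alpha>1) \<in> left_graph a Y" using wa by (auto simp: lg_mem)
    have "(w + - \<alpha>1) + \<omega> = w + Z w" using om
      by (simp add: add.assoc diff_conv_add_uminus del: add_uminus_conv_diff)
    then have c2: "(w + - \<alpha>1) + \<omega> \<in> left_graph a Z" using wa by (auto simp: lg_mem)
    have "\<omega> + (- Z w + X \<alpha>1) = \<alpha>1 + X \<alpha>1" using om
      by (simp add: add.assoc diff_conv_add_uminus del: add_uminus_conv_diff)
    then have c3: "\<omega> + (- Z w + X \<alpha>1) \<in> left_graph a X" using a1(1) by (auto simp: lg_mem)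
    show "\<omega> \<in> Gamma (left_graph a X) a (left_graph a Y) b (left_graph a Z)"
      unfolding Gamma_def using m1 m2 c1 c2 c3 by blast
  qed
  show "Gamma (left_graph a X) a (left_graph a Y) b (left_graph a Z) \<subseteq> left_graph a (bij_law a X Y Z)"
  proof
    fix \<omega> assume "\<omega> \<in> Gamma (left_graph a X) a (left_graph a Y) b (left_graph a Z)"
    then obtain \<alpha> \<beta> where ab: "\<alpha> \<in> a" "\<beta> \<in> b" and
      g1: "\<alpha> + \<omega> + \<beta> \<in> left_graph a Y" and g2: "\<alpha> + \<omega> \<in> left_graph a Z" and g3: "\<omega> + \<beta> \<in> left_graph a X"
      unfolding Gamma_def by blast
    obtain \<alpha>3 where a3: "\<alpha>3 \<in> a" "\<alpha> + \<omega> + \<beta> = \<alpha>3 + Y \<alpha>3" using g1 by (auto simp: lg_mem)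
    obtain \<alpha>2 where a2: "\<alpha>2 \<in> a" "\<alpha> + \<omega> = \<alpha>2 + Z \<alpha>2" using g2 by (auto simp: lg_mem)
    obtain \<alpha>1 where a1: "\<alpha>1 \<in> a" "\<omega> + \<beta> = \<alpha>1 + X \<alpha>1" using g3 by (auto simp: lg_mem)
    have "(\<alpha> + \<alpha>1) + X \<alpha>1 = \<alpha>3 + Y \<alpha>3" using a3(2) a1(2)
      by (simp add: add.assoc)
    then have e1: "\<alpha> + \<alpha>1 = \<alpha>3 \<and> X \<alpha>1 = Y \<alpha>3"
      by (intro transv_uniq[OF tab]) (use ab a1(1) a3(1) sg[OF sa] bijsD(3)[OF X a1(1)] bijsD(3)[OF Y a3(1)] in auto)
    have "\<alpha>2 + (Z \<alpha>2 + \<beta>) = \<alpha>3 + Y \<alpha>3" using a3(2) a2(2)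
      by (simp add: add.assoc)
    then have e2: "\<alpha>2 = \<alpha>3 \<and> Z \<alpha>2 + \<beta> = Y \<alpha>3"
      by (intro transv_uniq[OF tab]) (use ab a2(1) a3(1) sg[OF sb] bijsD(3)[OF Z a2(1)] bijsD(3)[OF Y a3(1)] in auto)
    have inv: "inv_into a Y (X \<alpha>1) = \<alpha>3" using inv_eq[OF Y a3(1)] e1 by simp
    have "\<omega> = - \<alpha> + (\<alpha> + \<omega>)" by (simp add: add.assoc)
    also have "\<dots> = - \<alpha> + ((\<alpha> + \<alpha>1) + Z \<alpha>3)" using a2(2) e1 e2 by simp
    also have "\<dots> = \<alpha>1 + Z \<alpha>3" by (simp add: add.assoc)
    also have "\<dots> = \<alpha>1 + bij_law a X Y Z \<alpha>1" using inv a1(1) by (simp add: law_app)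
    finally show "\<omega> \<in> left_graph a (bij_law a X Y Z)" using a1(1) by (auto simp: lg_mem)
  qed
qed

end

theorem theorem4p4:
  fixes a b :: "'a::group_add set"
  assumes "add_subgroup a" and "add_subgroup b" and "transv a b"
  shows "(\<forall>x\<in>Uab a b. \<forall>y\<in>Uab a b. \<forall>z\<in>Uab a b. Gamma x a y b z \<in> Uab a b)
     \<and> torsor (Uab a b) (\<lambda>x y z. Gamma x a y b z)
     \<and> torsor (bijs a b) (bij_law a)
     \<and> bij_betw (left_graph a) (bijs a b) (Uab a b)
     \<and> (\<forall>X\<in>bijs a b. \<forall>Y\<in>bijs a b. \<forall>Z\<in>bijs a b.
          left_graph a (bij_law a X Y Z)
            = Gamma (left_graph a X) a (left_graph a Y) b (left_graph a Z))"
proof -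
  note g1 = G1[OF assms] and g2 = G2[OF assms] and g3 = G3[OF assms] and g4 = G4[OF assms]
  have bb: "bij_betw (left_graph a) (bijs a b) (Uab a b)"
    unfolding bij_betw_def
  proof
    show "inj_on (left_graph a) (bijs a b)" by (rule g3)
    show "left_graph a ` bijs a b = Uab a b"
    proof
      show "left_graph a ` bijs a b \<subseteq> Uab a b" using g1 by blast
      show "Uab a b \<subseteq> left_graph a ` bijs a b"
      proof
        fix x assume "x \<in> Uab a b"
        then obtain F where "F \<in> bijs a b" "x = left_graph a F" using g2 by blast
        then show "x \<in> left_graph a ` bijs a b" by blast
      qed
    qed
  qed
  have tu: "torsor (Uab a b) (\<lambda>x y z. Gamma x a y b z)"
    by (rule torsor_transport[OF torsor_bijs bb]) (rule g4)
  have cl: "\<forall>x\<in>Uab a b. \<forall>y\<in>Uab a b. \<forall>z\<in>Uab a b. Gamma x a y b z \<in> Uab a b"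
    using tu unfolding torsor_def by (rule conjunct1)
  have g4': "\<forall>X\<in>bijs a b. \<forall>Y\<in>bijs a b. \<forall>Z\<in>bijs a b.
          left_graph a (bij_law a X Y Z)
            = Gamma (left_graph a X) a (left_graph a Y) b (left_graph a Z)"
    using g4 by blast
  show ?thesis by (intro conjI cl tu torsor_bijs bb g4')
qed


end
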